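(* Let $\Theta$ be a convex overmarked box and $(\varepsilon,\delta)\in\mathbb{R}^2$. Then the convex interior of $\sigma_{(\varepsilon,\delta)}(\Theta)$ is contained in the convex interior of $\Theta$ if and only if $(\varepsilon,\delta)\in\mathcal{R}$.
   Context: Let $V$ be a 3-dimensional real vector space. An overmarked box is $\Theta=((p,q,r,s;t,b),(P,Q,R,S;T,B))$ with $p,\dots,b\in\mathbf{P}(V)$ and lines $P,\dots,B$ of $\mathbf{P}(V)$ such that $P=ts$, $Q=tr$, $R=bq$, $S=bp$, $T=pq$, $B=rs$ (here $xy$ is the line through $x,y$) and $T\cap B\notin\{p,q,r,s,t,b\}$. A $\Theta$-basis is a basis of $V$, unique up to scaling, in which $p=[-1:1:0]$, $q=[1:1:0]$, $r=[1:0:1]$, $s=[-1:0:1]$; then $t=[\zeta_t:1:0]$ and $b=[\zeta_b:0:1]$; $\Theta$ is convex iff $\zeta_t,\zeta_b\in\,]-1,1[$. The convex interior of a convex $\Theta$ is the interior of the convex quadrilateral with vertices $p,q,r,s$ (in this cyclic order) whose sides $[pq]\ni t$ and $[rs]\ni b$; in $\Theta$-basis coordinates it is $\{[x:y:z]: y+z\ne0,\ |x|<|y+z|,\ |y-z|<|y+z|\}$. For $(\varepsilon,\delta)\in\mathbb{R}^2$ let $$\Sigma_{(\varepsilon,\delta)}=\begin{pmatrix}1&0&0\\0&e^{-\delta}\cosh\varepsilon&-\sinh\varepsilon\\0&-\sinh\varepsilon&e^{\delta}\cosh\varepsilon\end{pmatrix},$$ and $\sigma_{(\varepsilon,\delta)}(\Theta)$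 the image of $\Theta$ under the projective transformation with matrix $\Sigma_{(\varepsilon,\delta)}$ in a $\Theta$-basis (its convex interior is the image of that of $\Theta$). Let $f(\varepsilon,\delta)=e^{-\delta}\cosh\varepsilon-\sinh\varepsilon-1$ and $\mathcal{R}=\{(\varepsilon,\delta)\in\mathbb{R}^2:f(\varepsilon,\delta)\ge0,\ f(\varepsilon,-\delta)\ge0\}$. *)

theory Defs
  imports "HOL-Analysis.Analysis"
begin

text \<open>The 3-dimensional real vector space V is modelled as real^3.
 A point of P(V) is represented by a nonzero vector, a line of P(V) by a
 nonzero covector (also in real^3); incidence is vanishing of the pairing.\<close>

definition proj_eq :: "real^3 \<Rightarrow> real^3 \<Rightarrow> bool" where
  "proj_eq x y \<longleftrightarrow> x \<noteq> 0 \<and> y \<noteq> 0 \<and> (\<exists>c. c \<noteq> 0 \<and> x = c *\<^sub>R y)"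

definition incident :: "real^3 \<Rightarrow> real^3 \<Rightarrow> bool" where
  "incident x L \<longleftrightarrow> x \<bullet> L = 0"

definition is_join :: "real^3 \<Rightarrow> real^3 \<Rightarrow> real^3 \<Rightarrow> bool" where
  "is_join L x y \<longleftrightarrow> L \<noteq> 0 \<and> x \<noteq> 0 \<and> y \<noteq> 0 \<and> \<not> proj_eq x y \<and> incident x L \<and> incident y L"

definition overmarked_box ::
  "real^3 \<Rightarrow> real^3 \<Rightarrow> real^3 \<Rightarrow> real^3 \<Rightarrow> real^3 \<Rightarrow> real^3 \<Rightarrow>
   real^3 \<Rightarrow> real^3 \<Rightarrow> real^3 \<Rightarrow> real^3 \<Rightarrow> real^3 \<Rightarrow> real^3 \<Rightarrow> bool" where
  "overmarked_box p q r s t b P Q R S T B \<longleftrightarrow>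
     is_join P t s \<and> is_join Q t r \<and> is_join R b q \<and> is_join S b p \<and>
     is_join T p q \<and> is_join B r s \<and>
     \<not> proj_eq T B \<and>
     (\<forall>z. z \<noteq> 0 \<and> incident z T \<and> incident z B \<longrightarrow>
        (\<forall>w\<in>{p,q,r,s,t,b}. \<not> proj_eq z w))"

text \<open>M (columns = basis vectors) is a Theta-basis: coordinates of x are matrix_inv M *v x.\<close>
definition theta_basis :: "real^3^3 \<Rightarrow> real^3 \<Rightarrow> real^3 \<Rightarrow> real^3 \<Rightarrow> real^3 \<Rightarrow> bool" where
  "theta_basis M p q r s \<longleftrightarrow> invertible M \<and>
     proj_eq p (M *v vector [-1, 1, 0]) \<and>
     proj_eq q (M *v vector [1, 1, 0]) \<and>
     proj_eq r (M *v vector [1, 0, 1]) \<and>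
     proj_eq s (M *v vector [-1, 0, 1])"

definition convex_box :: "real^3^3 \<Rightarrow> real^3 \<Rightarrow> real^3 \<Rightarrow> bool" where
  "convex_box M t b \<longleftrightarrow> (\<exists>zt zb. -1 < zt \<and> zt < 1 \<and> -1 < zb \<and> zb < 1 \<and>
     proj_eq t (M *v vector [zt, 1, 0]) \<and> proj_eq b (M *v vector [zb, 0, 1]))"

definition convex_interior :: "real^3^3 \<Rightarrow> (real^3) set" where
  "convex_interior M = {v. let c = matrix_inv M *v v in
      c$2 + c$3 \<noteq> 0 \<and> \<bar>c$1\<bar> < \<bar>c$2 + c$3\<bar> \<and> \<bar>c$2 - c$3\<bar> < \<bar>c$2 + c$3\<bar>}"

definition Sigma_mat :: "real \<Rightarrow> real \<Rightarrow> real^3^3" where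
  "Sigma_mat \<epsilon> \<delta> = vector [vector [1, 0, 0],
                               vector [0, exp (-\<delta>) * cosh \<epsilon>, - sinh \<epsilon>],
                               vector [0, - sinh \<epsilon>, exp \<delta> * cosh \<epsilon>]]"

definition sigma_map :: "real^3^3 \<Rightarrow> real \<Rightarrow> real \<Rightarrow> real^3 \<Rightarrow> real^3" where
  "sigma_map M \<epsilon> \<delta> v = (M ** Sigma_mat \<epsilon> \<delta> ** matrix_inv M) *v v"

definition f_fun :: "real \<Rightarrow> real \<Rightarrow> real" where
  "f_fun \<epsilon> \<delta> = exp (-\<delta>) * cosh \<epsilon> - sinh \<epsilon> - 1"

definition region_R :: "(real \<times> real) set" where
  "region_R = {(\<epsilon>, \<delta>). f_fun \<epsilon> \<delta> \<ge> 0 \<and> f_fun \<epsilon> (-\<delta>) \<ge> 0}"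

end

theory Submission imports Defs begin

lemma minv: assumes "invertible (M::real^3^3)"
  shows "M ** matrix_inv M = mat 1" "matrix_inv M ** M = mat 1"
proof -
  have "\<exists>A'. M ** A' = mat 1 \<and> A' ** M = mat 1" using assms unfolding invertible_def by blast
  hence "M ** matrix_inv M = mat 1 \<and> matrix_inv M ** M = mat 1"
    unfolding matrix_inv_def by (rule someI_ex)
  thus "M ** matrix_inv M = mat 1" "matrix_inv M ** M = mat 1" by auto
qed

definition inC :: "real \<Rightarrow> real \<Rightarrow> real \<Rightarrow> bool" where
  "inC x y z \<longleftrightarrow> y + z \<noteq> 0 \<and> \<bar>x\<bar> < \<bar>y + z\<bar> \<and> \<bar>y - z\<bar> < \<bar>y + z\<bar>"

lemma sig_comp:
  "(Sigma_mat e d *v c) $ 1 = c$1"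
  "(Sigma_mat e d *v c) $ 2 = exp (-d) * cosh e * c$2 - sinh e * c$3"
  "(Sigma_mat e d *v c) $ 3 = - sinh e * c$2 + exp d * cosh e * c$3"
  by (simp_all add: Sigma_mat_def matrix_vector_mult_def sum_3)

lemma ci_iff: "v \<in> convex_interior M \<longleftrightarrow> inC ((matrix_inv M *v v)$1) ((matrix_inv M *v v)$2) ((matrix_inv M *v v)$3)"
  by (simp add: convex_interior_def inC_def Let_def)

lemma inC_yz: "inC x y z \<longleftrightarrow> y * z > 0 \<and> \<bar>x\<bar> < \<bar>y + z\<bar>"
proof -
  have "\<bar>y - z\<bar> < \<bar>y + z\<bar> \<longleftrightarrow> y*z > 0"
    by (cases "y > 0"; cases "z > 0"; cases "y = 0"; cases "z = 0")
       (auto simp: abs_if mult_pos_pos mult_neg_neg zero_less_mult_iff)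
  thus ?thesis unfolding inC_def by auto
qed


lemma alg:
  fixes a dd s :: real
  assumes ad: "a * dd = 1 + s^2" and apos: "a > 0" and dpos: "dd > 0"
  shows "(\<forall>x y z. inC x y z \<longrightarrow> inC x (a*y - s*z) (-s*y + dd*z)) \<longleftrightarrow> (a - s \<ge> 1 \<and> dd - s \<ge> 1)"
proof
  assume H: "\<forall>x y z. inC x y z \<longrightarrow> inC x (a*y - s*z) (-s*y + dd*z)"
  have sneg: "s \<le> 0"
  proof (rule ccontr)
    assume "\<not> s \<le> 0"
    hence sp: "s > 0" by simp
    define \<eta> where "\<eta> = s / (2*dd)"
    have ep: "\<eta> > 0" using sp dpos by (simp add: \<eta>_def)
    have "inC 0 1 \<eta>" using ep by (simp add: inC_yz)
    hence "inC 0 (a*1 - s*\<eta>) (-s*1 + dd*\<eta>)" using H by blast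
    hence pos: "(a*1 - s*\<eta>) * (-s*1 + dd*\<eta>) > 0" by (simp add: inC_yz)
    have z': "-s*1 + dd*\<eta> = -s/2" using dpos by (simp add: \<eta>_def field_simps)
    have y': "a*1 - s*\<eta> = (2 + s^2) / (2*dd)" using dpos ad
      by (simp add: \<eta>_def field_simps power2_eq_square)
    have "(2 + s^2) / (2*dd) > 0" using dpos by (simp add: add_pos_nonneg)
    moreover have "-s/2 < 0" using sp by simp
    ultimately have "(a*1 - s*\<eta>) * (-s*1 + dd*\<eta>) < 0" unfolding y' z'
      using mult_pos_neg by blast
    with pos show False by simp
  qed
  have Ap: "a - s > 0" "dd - s > 0" using sneg apos dpos by auto
  show "a - s \<ge> 1 \<and> dd - s \<ge> 1"
  proof (rule ccontr)
    assume "\<not> (a - s \<ge> 1 \<and> dd - s \<ge> 1)"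
    hence "a - s < 1 \<or> dd - s < 1" by auto
    thus False
    proof
      assume A1: "a - s < 1"
      define \<eta> where "\<eta> = (1 - (a - s)) / (2 * (dd - s + 1))"
      have ep: "\<eta> > 0" using A1 Ap by (simp add: \<eta>_def)
      have e1: "(dd - s + 1) * \<eta> = (1 - (a - s)) / 2"
        using Ap by (simp add: \<eta>_def field_simps)
      have "(dd - s) * \<eta> < (dd - s + 1) * \<eta>" using ep by (simp add: algebra_simps)
      also have "\<dots> = (1 - (a - s)) / 2" by (rule e1)
      also have "\<dots> < 1 - (a - s)" using A1 by simp
      finally have "(dd - s) * \<eta> < 1 - (a - s)" .
      hence sm: "(a - s) + (dd - s) * \<eta> < 1" by simp
      have "inC 1 1 \<eta>" using ep by (simp add: inC_yz)
      hence "inC 1 (a*1 - s*\<eta>) (-s*1 + dd*\<eta>)" using H by blast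
      hence "1 < \<bar>(a*1 - s*\<eta>) + (-s*1 + dd*\<eta>)\<bar>" by (simp add: inC_yz)
      moreover have "(a*1 - s*\<eta>) + (-s*1 + dd*\<eta>) = (a - s) + (dd - s) * \<eta>"
        by (simp add: algebra_simps)
      moreover have "(a - s) + (dd - s) * \<eta> > 0" using Ap ep by (simp add: add_pos_pos mult_pos_pos)
      ultimately show False using sm by simp
    next
      assume A1: "dd - s < 1"
      define \<eta> where "\<eta> = (1 - (dd - s)) / (2 * (a - s + 1))"
      have ep: "\<eta> > 0" using A1 Ap by (simp add: \<eta>_def)
      have e1: "(a - s + 1) * \<eta> = (1 - (dd - s)) / 2"
        using Ap by (simp add: \<eta>_def field_simps)
      have "(a - s) * \<eta> < (a - s + 1) * \<eta>" using ep by (simp add: algebra_simps)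
      also have "\<dots> = (1 - (dd - s)) / 2" by (rule e1)
      also have "\<dots> < 1 - (dd - s)" using A1 by simp
      finally have "(a - s) * \<eta> < 1 - (dd - s)" .
      hence sm: "(dd - s) + (a - s) * \<eta> < 1" by simp
      have "inC 1 \<eta> 1" using ep by (simp add: inC_yz)
      hence "inC 1 (a*\<eta> - s*1) (-s*\<eta> + dd*1)" using H by blast
      hence "1 < \<bar>(a*\<eta> - s*1) + (-s*\<eta> + dd*1)\<bar>" by (simp add: inC_yz)
      moreover have "(a*\<eta> - s*1) + (-s*\<eta> + dd*1) = (dd - s) + (a - s) * \<eta>"
        by (simp add: algebra_simps)
      moreover have "(dd - s) + (a - s) * \<eta> > 0" using Ap ep by (simp add: add_pos_pos mult_pos_pos)
      ultimately show False using sm by simp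
    qed
  qed
next
  assume R: "a - s \<ge> 1 \<and> dd - s \<ge> 1"
  have sneg: "s \<le> 0"
  proof (rule ccontr)
    assume "\<not> s \<le> 0"
    hence sp: "s > 0" by simp
    have "(1 + s) * (1 + s) \<le> a * dd"
      using R sp by (intro mult_mono) simp_all
    with ad sp show False by (simp add: power2_eq_square algebra_simps)
  qed
  show "\<forall>x y z. inC x y z \<longrightarrow> inC x (a*y - s*z) (-s*y + dd*z)"
  proof (intro allI impI)
    fix x y z assume "inC x y z"
    hence yz: "y * z > 0" and xa: "\<bar>x\<bar> < \<bar>y + z\<bar>" by (auto simp: inC_yz)
    have sum: "(a*y - s*z) + (-s*y + dd*z) = (a - s)*y + (dd - s)*z" by (simp add: algebra_simps)
    from yz have "(y > 0 \<and> z > 0) \<or> (y < 0 \<and> z < 0)" by (auto simp: zero_less_mult_iff)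
    thus "inC x (a*y - s*z) (-s*y + dd*z)"
    proof
      assume p: "y > 0 \<and> z > 0"
      have h1: "a*y > 0" "(-s)*z \<ge> 0" "(-s)*y \<ge> 0" "dd*z > 0"
        using p apos dpos sneg by (simp_all add: mult_nonpos_nonneg)
      have h2: "(a - s - 1)*y \<ge> 0" "(dd - s - 1)*z \<ge> 0" using R p by simp_all
      have y'p: "a*y - s*z > 0" using h1 by (simp add: algebra_simps)
      have z'p: "-s*y + dd*z > 0" using h1 by (simp add: algebra_simps)
      have "(a - s)*y + (dd - s)*z \<ge> y + z" using h2 by (simp add: algebra_simps)
      thus ?thesis using y'p z'p xa p unfolding inC_yz sum by simp
    next
      assume p: "y < 0 \<and> z < 0"
      have h1: "a*y < 0" "(-s)*z \<le> 0" "(-s)*y \<le> 0" "dd*z < 0"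
        using p apos dpos sneg by (simp_all add: mult_pos_neg mult_nonneg_nonpos mult_nonpos_nonpos)
      have h2: "(a - s - 1)*y \<le> 0" "(dd - s - 1)*z \<le> 0" using R p
        by (simp_all add: mult_nonneg_nonpos)
      have y'p: "a*y - s*z < 0" using h1 by (simp add: algebra_simps)
      have z'p: "-s*y + dd*z < 0" using h1 by (simp add: algebra_simps)
      have "(a - s)*y + (dd - s)*z \<le> y + z" using h2 by (simp add: algebra_simps)
      thus ?thesis using y'p z'p xa p unfolding inC_yz sum
        by (simp add: mult_neg_neg)
    qed
  qed
qed


lemma Ninv: assumes "invertible (M::real^3^3)"
  shows "matrix_inv M *v sigma_map M e d v = Sigma_mat e d *v (matrix_inv M *v v)"
    "matrix_inv M *v (M *v c) = c"
proof -
  have "matrix_inv M *v sigma_map M e d v = (matrix_inv M ** M) ** Sigma_mat e d ** matrix_inv M *v v"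
    unfolding sigma_map_def by (simp add: matrix_vector_mul_assoc matrix_mul_assoc)
  thus "matrix_inv M *v sigma_map M e d v = Sigma_mat e d *v (matrix_inv M *v v)"
    using minv[OF assms] by (simp add: matrix_vector_mul_assoc)
  show "matrix_inv M *v (M *v c) = c"
    using minv[OF assms] by (simp add: matrix_vector_mul_assoc)
qed

lemma img_iff: assumes "invertible (M::real^3^3)"
  shows "sigma_map M e d ` convex_interior M \<subseteq> convex_interior M \<longleftrightarrow>
    (\<forall>x y z. inC x y z \<longrightarrow> inC x (exp (-d) * cosh e * y - sinh e * z) (- sinh e * y + exp d * cosh e * z))"
proof
  assume H: "sigma_map M e d ` convex_interior M \<subseteq> convex_interior M"
  show "\<forall>x y z. inC x y z \<longrightarrow> inC x (exp (-d) * cosh e * y - sinh e * z) (- sinh e * y + exp d * cosh e * z)"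
  proof (intro allI impI)
    fix x y z assume h: "inC x y z"
    define c :: "real^3" where "c = vector [x,y,z]"
    have "M *v c \<in> convex_interior M" using h
      by (simp add: ci_iff Ninv[OF assms] c_def)
    hence "sigma_map M e d (M *v c) \<in> convex_interior M" using H by blast
    thus "inC x (exp (-d) * cosh e * y - sinh e * z) (- sinh e * y + exp d * cosh e * z)"
      by (simp add: ci_iff Ninv[OF assms] c_def sig_comp)
  qed
next
  assume H: "\<forall>x y z. inC x y z \<longrightarrow> inC x (exp (-d) * cosh e * y - sinh e * z) (- sinh e * y + exp d * cosh e * z)"
  show "sigma_map M e d ` convex_interior M \<subseteq> convex_interior M"
  proof
    fix w assume "w \<in> sigma_map M e d ` convex_interior M"
    then obtain v where v: "v \<in> convex_interior M" "w = sigma_map M e d v" by blast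
    from v(1) H show "w \<in> convex_interior M"
      unfolding v(2) by (simp add: ci_iff Ninv[OF assms] sig_comp)
  qed
qed

theorem proposition7p4:
  fixes p q r s t b P Q R S T B :: "real^3" and M :: "real^3^3" and \<epsilon> \<delta> :: real
  assumes "overmarked_box p q r s t b P Q R S T B"
    and "theta_basis M p q r s"
    and "convex_box M t b"
  shows "sigma_map M \<epsilon> \<delta> ` convex_interior M \<subseteq> convex_interior M
         \<longleftrightarrow> (\<epsilon>, \<delta>) \<in> region_R"
proof -
  have inv: "invertible M" using assms(2) by (simp add: theta_basis_def)
  have ad: "(exp (-\<delta>) * cosh \<epsilon>) * (exp \<delta> * cosh \<epsilon>) = 1 + (sinh \<epsilon>)^2"
  proof -
    have "(exp (-\<delta>) * cosh \<epsilon>) * (exp \<delta> * cosh \<epsilon>) = (exp (-\<delta>) * exp \<delta>) * (cosh \<epsilon>)^2"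
      by (simp add: power2_eq_square algebra_simps)
    also have "\<dots> = (cosh \<epsilon>)^2" by (simp add: exp_minus_inverse mult.commute)
    finally show ?thesis by (simp add: cosh_square_eq)
  qed
  have R: "(\<epsilon>, \<delta>) \<in> region_R \<longleftrightarrow> (exp (-\<delta>) * cosh \<epsilon> - sinh \<epsilon> \<ge> 1 \<and> exp \<delta> * cosh \<epsilon> - sinh \<epsilon> \<ge> 1)"
    by (simp add: region_R_def f_fun_def)
  show ?thesis
    unfolding img_iff[OF inv] R
    by (rule alg[OF ad]) simp_all
qed

end
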